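(* Let $\mathcal{H}=(V,\mathcal{A})$ be a multi-head HyTN in which every node of $V$ is the tail of at least one hyperarc, and let $G_{\mathcal{H}}$ be its associated mean payoff game. If $\mathcal{H}$ is consistent, then every node of $G_{\mathcal{H}}$ is a winning start position for Player 1.
   Context: A multi-head HyTN is a pair $\mathcal{H}=(V,\mathcal{A})$, $V$ a finite node set, $\mathcal{A}$ a finite set of hyperarcs $A=(t_A,H_A,w_A)$ with tail $t_A\in V$, nonempty head set $H_A\subseteq V\setminus\{t_A\}$ and weights $w_A(v)\in\mathbb{R}$ for $v\in H_A$. A scheduling $s:V\to\mathbb{R}$ is feasible if $s(t_A)\ge\min_{v\in H_A}\{s(v)-w_A(v)\}$ for all $A\in\mathcal{A}$; $\mathcal{H}$ is consistent if a feasible scheduling exists. A mean payoff game (MPG) is a finite directed graph with real arc weights whose node set is partitioned into $V_0$ (nodes of Player 0) and $V_1$ (nodes of Player 1), where every node has at least one outgoing arc. A play from a start node $v_0$ proceeds in moves: when the pebble is at $v_{t-1}\in V_p$, Player $p$ chooses an arc $e_t$ leaving $v_{t-1}$ and the pebble moves to its head $v_t$. The play ends at the first $t$ such that $v_t=v_{t'}$ for some $t'<t$; Player 0 wins if $\frac{1}{t-t'}\sum_{i=t'+1}^{t}w(e_i)<0$, otherwise Player 1 wins. A strategy for Player $p$ maps each history ending in a node of $V_p$ to an outgoing arc of that node. A node $s$ is a winning start position for Player 1 if Player 1 has a strategy such that every play starting at $s$ in which Player 1 follows it is won by Player 1. The associated game $G_{\mathcal{H}}$ has $V_0=V$, $V_1=\mathcal{A}$,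 and arc set $\{(t_A,A,0)\mid A\in\mathcal{A}\}\cup\{(A,h,w_A(h))\mid A\in\mathcal{A},h\in H_A\}$ (an arc $(x,y,w)$ goes from $x$ to $y$ with weight $w$). *)

theory Defs
  imports Main "HOL-Library.Multiset" Complex_Main
begin

text \<open>A hyperarc is a triple (tail, head set, weight function); the weight
function is only relevant on the head set.\<close>
type_synonym 'v hyperarc = "'v \<times> 'v set \<times> ('v \<Rightarrow> real)"

definition hytn :: "'v set \<Rightarrow> 'v hyperarc set \<Rightarrow> bool" where
  "hytn V As \<longleftrightarrow> finite V \<and> finite As \<and>
     (\<forall>(t, H, w) \<in> As. t \<in> V \<and> H \<noteq> {} \<and> H \<subseteq> V - {t})"

definition feasible_scheduling :: "'v hyperarc set \<Rightarrow> ('v \<Rightarrow> real) \<Rightarrow> bool" where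
  "feasible_scheduling As s \<longleftrightarrow>
     (\<forall>(t, H, w) \<in> As. s t \<ge> Min ((\<lambda>v. s v - w v) ` H))"

definition hytn_consistent :: "'v hyperarc set \<Rightarrow> bool" where
  "hytn_consistent As \<longleftrightarrow> (\<exists>s. feasible_scheduling As s)"

text \<open>An arc is a triple (source, target, weight). A game is given by the set
V1 of nodes of Player 1 and the arc set E; nodes not in V1 belong to Player 0.\<close>
type_synonym 'n arc = "'n \<times> 'n \<times> real"

definition play_nodes :: "'n \<Rightarrow> 'n arc list \<Rightarrow> 'n list" where
  "play_nodes s es = s # map (\<lambda>e. fst (snd e)) es"

definition path_from :: "'n arc set \<Rightarrow> 'n \<Rightarrow> 'n arc list \<Rightarrow> bool" where
  "path_from E s es \<longleftrightarrow> (\<forall>i < length es. es ! i \<in> E \<and> fst (es ! i) = play_nodes s es ! i)"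

text \<open>A strategy of Player 1 maps every history (start node and the moves so far)
ending in a node of V1 to an arc leaving that node.\<close>
definition strategy1 :: "'n set \<Rightarrow> 'n arc set \<Rightarrow> ('n \<Rightarrow> 'n arc list \<Rightarrow> 'n arc) \<Rightarrow> bool" where
  "strategy1 V1 E \<sigma> \<longleftrightarrow> (\<forall>s es. path_from E s es \<and> last (play_nodes s es) \<in> V1 \<longrightarrow>
       \<sigma> s es \<in> E \<and> fst (\<sigma> s es) = last (play_nodes s es))"

definition follows1 :: "'n set \<Rightarrow> ('n \<Rightarrow> 'n arc list \<Rightarrow> 'n arc) \<Rightarrow> 'n \<Rightarrow> 'n arc list \<Rightarrow> bool" where
  "follows1 V1 \<sigma> s es \<longleftrightarrow> (\<forall>i < length es. play_nodes s es ! i \<in> V1 \<longrightarrow> es ! i = \<sigma> s (take i es))"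

definition finished_play :: "'n \<Rightarrow> 'n arc list \<Rightarrow> bool" where
  "finished_play s es \<longleftrightarrow> es \<noteq> [] \<and> distinct (butlast (play_nodes s es)) \<and>
     last (play_nodes s es) \<in> set (butlast (play_nodes s es))"

definition cycle_start :: "'n \<Rightarrow> 'n arc list \<Rightarrow> nat" where
  "cycle_start s es = (THE i. i < length es \<and> play_nodes s es ! i = last (play_nodes s es))"

definition won_by_player1 :: "'n \<Rightarrow> 'n arc list \<Rightarrow> bool" where
  "won_by_player1 s es \<longleftrightarrow>
     (let t = length es; t' = cycle_start s es
      in \<not> ((\<Sum>e \<leftarrow> drop t' es. snd (snd e)) / real (t - t') < 0))"

definition winning_start1 :: "'n set \<Rightarrow> 'n arc set \<Rightarrow> 'n \<Rightarrow> bool" where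
  "winning_start1 V1 E s \<longleftrightarrow> (\<exists>\<sigma>. strategy1 V1 E \<sigma> \<and>
     (\<forall>es. path_from E s es \<and> follows1 V1 \<sigma> s es \<and> finished_play s es \<longrightarrow> won_by_player1 s es))"

definition assoc_V0 :: "'v set \<Rightarrow> ('v + 'v hyperarc) set" where
  "assoc_V0 V = Inl ` V"

definition assoc_V1 :: "'v hyperarc set \<Rightarrow> ('v + 'v hyperarc) set" where
  "assoc_V1 As = Inr ` As"

definition assoc_arcs :: "'v hyperarc set \<Rightarrow> ('v + 'v hyperarc) arc set" where
  "assoc_arcs As =
     {(Inl (fst A), Inr A, 0) | A. A \<in> As} \<union>
     {(Inr A, Inl h, snd (snd A) h) | A h. A \<in> As \<and> h \<in> fst (snd A)}"

end

theory Submission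
  imports Defs
begin

lemma hsel_ex:
  assumes "hytn V As" "feasible_scheduling As s" "A \<in> As"
  shows "\<exists>h. h \<in> fst (snd A) \<and> s h - snd (snd A) h \<le> s (fst A)"
proof -
  obtain t H w where A: "A = (t, H, w)" by (cases A) auto
  have H: "H \<noteq> {}" "H \<subseteq> V" "finite V" using assms(1,3) A unfolding hytn_def by auto
  hence fH: "finite H" using finite_subset by blast
  have le: "s t \<ge> Min ((\<lambda>v. s v - w v) ` H)" using assms(2,3) A unfolding feasible_scheduling_def by auto
  have "Min ((\<lambda>v. s v - w v) ` H) \<in> (\<lambda>v. s v - w v) ` H" using fH H(1) by (intro Min_in) auto
  then obtain h where "h \<in> H" "Min ((\<lambda>v. s v - w v) ` H) = s h - w h" by auto
  thus ?thesis using le A by auto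
qed

lemma pn_Suc: "i < length es \<Longrightarrow> play_nodes x es ! Suc i = fst (snd (es ! i))"
  by (simp add: play_nodes_def)

lemma pn_len[simp]: "length (play_nodes x es) = Suc (length es)"
  by (simp add: play_nodes_def)

lemma pn_last: "last (play_nodes x es) = play_nodes x es ! length es"
  by (simp add: last_conv_nth play_nodes_def)

lemma pn_take: "i < length es \<Longrightarrow> last (play_nodes x (take i es)) = play_nodes x es ! i"
  by (cases i) (auto simp: play_nodes_def last_conv_nth min_def)

lemma telescope:
  fixes g :: "'a \<Rightarrow> real" and p :: "'b \<Rightarrow> real"
  assumes "\<forall>i < length es. g (es ! i) \<ge> p (nodes ! Suc i) - p (nodes ! i)"
  shows "k \<le> length es \<Longrightarrow> sum_list (map g (drop k es)) \<ge> p (nodes ! length es) - p (nodes ! k)"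
proof (induction "length es - k" arbitrary: k)
  case 0
  then show ?case by auto
next
  case (Suc n)
  hence k: "k < length es" by auto
  have "drop k es = es ! k # drop (Suc k) es" using k by (simp add: Cons_nth_drop_Suc)
  hence "sum_list (map g (drop k es)) = g (es ! k) + sum_list (map g (drop (Suc k) es))" by simp
  moreover have "sum_list (map g (drop (Suc k) es)) \<ge> p (nodes ! length es) - p (nodes ! Suc k)"
    using Suc k by auto
  moreover have "g (es ! k) \<ge> p (nodes ! Suc k) - p (nodes ! k)" using assms k by auto
  ultimately show ?case by linarith
qed

theorem mainTheorem8:
  fixes V :: "'v set" and As :: "'v hyperarc set"
  assumes "hytn V As"
    and "\<forall>v \<in> V. \<exists>A \<in> As. fst A = v"
    and "hytn_consistent As"
  shows "\<forall>x \<in> assoc_V0 V \<union> assoc_V1 As. winning_start1 (assoc_V1 As) (assoc_arcs As) x"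
proof
  fix x
  obtain s where fs: "feasible_scheduling As s" using assms(3) unfolding hytn_consistent_def by auto
  define hsel where "hsel \<equiv> \<lambda>A. SOME h. h \<in> fst (snd A) \<and> s h - snd (snd A) h \<le> s (fst A)"
  have hsel: "hsel A \<in> fst (snd A) \<and> s (hsel A) - snd (snd A) (hsel A) \<le> s (fst A)" if "A \<in> As" for A
    unfolding hsel_def using someI_ex[OF hsel_ex[OF assms(1) fs that]] .
  define \<sigma> :: "('v + 'v hyperarc) \<Rightarrow> ('v + 'v hyperarc) arc list \<Rightarrow> ('v + 'v hyperarc) arc"
    where "\<sigma> \<equiv> \<lambda>x es. case last (play_nodes x es) of Inr A \<Rightarrow> (Inr A, Inl (hsel A), snd(snd A) (hsel A)) | Inl v \<Rightarrow> undefined"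
  define p :: "('v + 'v hyperarc) \<Rightarrow> real" where "p \<equiv> \<lambda>y. case y of Inl v \<Rightarrow> s v | Inr A \<Rightarrow> s (fst A)"
  have strat: "strategy1 (assoc_V1 As) (assoc_arcs As) \<sigma>"
    unfolding strategy1_def
  proof (intro allI impI)
    fix y es assume "path_from (assoc_arcs As) y es \<and> last (play_nodes y es) \<in> assoc_V1 As"
    then obtain A where A: "A \<in> As" "last (play_nodes y es) = Inr A" unfolding assoc_V1_def by auto
    show "\<sigma> y es \<in> assoc_arcs As \<and> fst (\<sigma> y es) = last (play_nodes y es)"
      using A hsel[OF A(1)] unfolding \<sigma>_def assoc_arcs_def by (cases A) auto
  qed
  show "winning_start1 (assoc_V1 As) (assoc_arcs As) x"
    unfolding winning_start1_def
  proof (intro exI conjI allI impI)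
    show "strategy1 (assoc_V1 As) (assoc_arcs As) \<sigma>" by (rule strat)
    fix es assume H: "path_from (assoc_arcs As) x es \<and> follows1 (assoc_V1 As) \<sigma> x es \<and> finished_play x es"
    define nodes where "nodes = play_nodes x es"
    have arc: "snd (snd (es ! i)) \<ge> p (nodes ! Suc i) - p (nodes ! i)" if i: "i < length es" for i
    proof -
      have e: "es ! i \<in> assoc_arcs As" "fst (es ! i) = nodes ! i"
        using H i unfolding path_from_def nodes_def by auto
      have tgt: "nodes ! Suc i = fst (snd (es ! i))" using pn_Suc[OF i] nodes_def by simp
      from e(1) show ?thesis unfolding assoc_arcs_def
      proof (elim UnE CollectE exE conjE)
        fix A assume "es ! i = (Inl (fst A), Inr A, 0)"
        thus ?thesis using e tgt unfolding p_def by (simp add: sym[OF e(2)])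
      next
        fix A h assume eq: "es ! i = (Inr A, Inl h, snd (snd A) h)" and A: "A \<in> As" "h \<in> fst (snd A)"
        have ni: "nodes ! i = Inr A" using e(2) eq by simp
        have "nodes ! i \<in> assoc_V1 As" using ni A unfolding assoc_V1_def by auto
        hence "es ! i = \<sigma> x (take i es)" using H i unfolding follows1_def nodes_def by auto
        also have "\<dots> = (Inr A, Inl (hsel A), snd(snd A) (hsel A))"
          using pn_take[OF i, of x] ni unfolding \<sigma>_def nodes_def by simp
        finally have "h = hsel A" using eq by simp
        thus ?thesis using hsel[OF A(1)] ni eq tgt unfolding p_def by simp
      qed
    qed
    have fp: "es \<noteq> []" "distinct (butlast nodes)" "last nodes \<in> set (butlast nodes)"
      using H unfolding finished_play_def nodes_def by auto
    have lb: "length (butlast nodes) = length es" unfolding nodes_def by simp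
    have nb: "butlast nodes ! i = nodes ! i" if "i < length es" for i
      using that lb by (simp add: nth_butlast)
    have ex1: "\<exists>!i. i < length es \<and> nodes ! i = last nodes"
    proof -
      obtain i where i: "i < length es" "butlast nodes ! i = last nodes"
        using fp(3) lb by (metis in_set_conv_nth)
      show ?thesis
      proof (rule ex1I[of _ i])
        show "i < length es \<and> nodes ! i = last nodes" using i nb by auto
      next
        fix j assume j: "j < length es \<and> nodes ! j = last nodes"
        hence "butlast nodes ! j = butlast nodes ! i" using i nb by auto
        thus "j = i" using fp(2) i j lb nth_eq_iff_index_eq by metis
      qed
    qed
    have cs: "cycle_start x es < length es \<and> nodes ! cycle_start x es = last nodes"
      unfolding cycle_start_def nodes_def[symmetric] by (rule theI'[OF ex1])
    have "sum_list (map (\<lambda>e. snd (snd e)) (drop (cycle_start x es) es))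
       \<ge> p (nodes ! length es) - p (nodes ! cycle_start x es)"
      by (rule telescope) (use arc cs in auto)
    moreover have "nodes ! length es = last nodes" unfolding nodes_def by (simp add: pn_last)
    ultimately have "sum_list (map (\<lambda>e. snd (snd e)) (drop (cycle_start x es) es)) \<ge> 0"
      using cs by simp
    thus "won_by_player1 x es" unfolding won_by_player1_def Let_def
      by (simp add: not_less)
  qed
qed

end
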